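(* Let $E\in M(m)$ be a real $m\times m$ matrix all of whose eigenvalues have positive real parts, and let $H\in M(n)$ be a real $n\times n$ matrix. Let $h:\mathbb{R}^m\to M(n,\mathbb{C})$ be a measurable function such that, for every $c>0$, $$h(c^{E}x)=c^{H/2}\,h(x)\,c^{H^*/2}\quad\text{for Lebesgue-a.e. } x\in\mathbb{R}^m$$ (the exceptional null set may depend on $c$). Then there exists an $(E,H)$-homogeneous function $\varphi:\mathbb{R}^m\setminus\{0\}\to M(n,\mathbb{C})$ such that $\varphi(x)=h(x)$ for Lebesgue-a.e. $x$.
   Context: For a square matrix $M$ and $c>0$, $c^{M}:=\sum_{k\ge0}(\log c)^kM^k/k!$. $A^*$ denotes the conjugate transpose. $M(n)$ is the space of real $n\times n$ matrices and $M(n,\mathbb{C})$ the space of complex $n\times n$ matrices. A function $\varphi:\mathbb{R}^m\to M(n,\mathbb{C})$ is called $(E,H)$-homogeneous if $\varphi(c^{E}x)=c^{H/2}\varphi(x)c^{H^*/2}$ for all $c>0$ and all $x\in\mathbb{R}^m\setminus\{0\}$. *)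

theory Defs
  imports "HOL-Analysis.Analysis"
begin

definition matpow :: "'a::comm_ring_1^'n^'n \<Rightarrow> nat \<Rightarrow> 'a^'n^'n" where
  "matpow M k = (((**) M) ^^ k) (mat 1)"

definition mat_cpow :: "real \<Rightarrow> real^'n^'n \<Rightarrow> real^'n^'n" where
  "mat_cpow c M = (\<Sum>k. ((ln c) ^ k / fact k) *\<^sub>R matpow M k)"

definition cmat :: "real^'m^'n \<Rightarrow> complex^'m^'n" where
  "cmat M = (\<chi> i j. complex_of_real (M $ i $ j))"

definition is_eigenvalue :: "real^'n^'n \<Rightarrow> complex \<Rightarrow> bool" where
  "is_eigenvalue M l \<longleftrightarrow> (\<exists>v::complex^'n. v \<noteq> 0 \<and> cmat M *v v = l *s v)"

text \<open>(E,H)-homogeneity on R^m minus the origin; H is real so H^* = transpose H.\<close>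
definition EH_homogeneous ::
  "real^'m^'m \<Rightarrow> real^'n^'n \<Rightarrow> (real^'m \<Rightarrow> complex^'n^'n) \<Rightarrow> bool" where
  "EH_homogeneous E H \<phi> \<longleftrightarrow>
     (\<forall>c>0. \<forall>x. x \<noteq> 0 \<longrightarrow>
        \<phi> (mat_cpow c E *v x) =
          cmat (mat_cpow c ((1/2) *\<^sub>R H)) ** \<phi> x ** cmat (mat_cpow c ((1/2) *\<^sub>R transpose H)))"

end

theory Submission imports Defs begin

definition gexp :: "real^'n^'n \<Rightarrow> real \<Rightarrow> real^'n^'n" where
  "gexp M t = (\<Sum>k. ((t ^ k / fact k) *\<^sub>R matpow M k))"

lemma matpow_0[simp]: "matpow M 0 = mat 1" by (simp add: matpow_def)
lemma matpow_Suc: "matpow M (Suc k) = M ** matpow M k" by (simp add: matpow_def)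
lemma matpow_add: "matpow M (a + b) = matpow M a ** matpow M b"
  by (induction a) (simp_all add: matpow_Suc matrix_mul_assoc)

definition bnd :: "real^'n^'n \<Rightarrow> real" where
  "bnd M = (\<Sum>i\<in>UNIV. \<Sum>j\<in>UNIV. \<bar>M$i$j\<bar>) + 1"

lemma bnd_row: "(\<Sum>l\<in>UNIV. \<bar>M$i$l\<bar>) \<le> bnd M"
proof -
  have "(\<Sum>l\<in>UNIV. \<bar>M$i$l\<bar>) \<le> (\<Sum>i\<in>UNIV. \<Sum>j\<in>UNIV. \<bar>M$i$j\<bar>)"
    by (rule member_le_sum[where f="\<lambda>i. \<Sum>j\<in>UNIV. \<bar>M$i$j\<bar>"]) (auto intro: sum_nonneg)
  thus ?thesis unfolding bnd_def by simp
qed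

lemma bnd_ge1: "1 \<le> bnd M"
  unfolding bnd_def by (simp add: sum_nonneg)

lemma matpow_bound: "\<bar>matpow M k $ i $ j\<bar> \<le> bnd M ^ k"
proof (induction k arbitrary: i j)
  case 0
  then show ?case by (simp add: mat_def)
next
  case (Suc k)
  have "\<bar>matpow M (Suc k) $ i $ j\<bar> = \<bar>\<Sum>l\<in>UNIV. M$i$l * matpow M k $ l $ j\<bar>"
    by (simp add: matpow_Suc matrix_matrix_mult_def)
  also have "\<dots> \<le> (\<Sum>l\<in>UNIV. \<bar>M$i$l\<bar> * bnd M ^ k)"
    by (rule order_trans[OF sum_abs]) (auto intro!: sum_mono mult_left_mono Suc simp: abs_mult)
  also have "\<dots> = (\<Sum>l\<in>UNIV. \<bar>M$i$l\<bar>) * bnd M ^ k" by (simp add: sum_distrib_right)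
  also have "\<dots> \<le> bnd M * bnd M ^ k"
    using bnd_ge1[of M] by (intro mult_right_mono bnd_row) auto
  finally show ?case by simp
qed

lemma summable_entry: "summable (\<lambda>k. \<bar>t^k / fact k * matpow M k $ i $ j\<bar>)"
  for M :: "real^'n^'n"
proof (rule summable_comparison_test[OF _ summable_exp[of "\<bar>t\<bar> * bnd M"]])
  show "\<exists>N. \<forall>n\<ge>N. norm \<bar>t ^ n / fact n * matpow M n $ i $ j\<bar> \<le> inverse (fact n) * (\<bar>t\<bar> * bnd M) ^ n"
  proof (intro exI allI impI)
    fix n :: nat
    have "\<bar>t ^ n / fact n * matpow M n $ i $ j\<bar> = inverse (fact n) * \<bar>t\<bar>^n * \<bar>matpow M n $ i $ j\<bar>"
      by (simp add: abs_mult power_abs divide_inverse)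
    also have "\<dots> \<le> inverse (fact n) * \<bar>t\<bar>^n * bnd M ^ n"
      by (intro mult_left_mono matpow_bound) auto
    finally show "norm \<bar>t ^ n / fact n * matpow M n $ i $ j\<bar> \<le> inverse (fact n) * (\<bar>t\<bar> * bnd M) ^ n"
      by (simp add: power_mult_distrib mult.assoc)
  qed
qed

lemma summable_entry': "summable (\<lambda>k. t^k / fact k * matpow M k $ i $ j)"
  for M :: "real^'n^'n"
  by (rule summable_rabs_cancel[OF summable_entry])

lemma gexp_sums: "(\<lambda>k. (t ^ k / fact k) *\<^sub>R matpow M k) sums
   (\<chi> i j. \<Sum>k. t^k / fact k * matpow M k $ i $ j)" for M :: "real^'n^'n"
proof -
  have eq: "(\<lambda>n. \<Sum>k<n. (t ^ k / fact k) *\<^sub>R matpow M k) =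
     (\<lambda>n. \<chi> i j. \<Sum>k<n. t^k / fact k * matpow M k $ i $ j)"
    by (auto simp: vec_eq_iff)
  show ?thesis unfolding sums_def eq
    apply (rule tendsto_vec_lambda)+
    using summable_entry'[THEN summable_LIMSEQ] by blast
qed

lemma gexp_entry: "gexp M t $ i $ j = (\<Sum>k. t^k / fact k * matpow M k $ i $ j)"
  unfolding gexp_def sums_unique[OF gexp_sums, symmetric] by simp

lemma binom_fact: "(s+t)^n / fact n = (\<Sum>m\<le>n. s^m / fact m * (t^(n-m) / fact (n-m)))"
  for s t :: real
  using exp_series_add_commuting[of s t n] by (simp add: divide_inverse mult.commute)

lemma gexp_add: "gexp M (s + t) = gexp M s ** gexp M t"
proof -
  define a where "a = (\<lambda>u i j k. u^k / fact k * matpow M k $ i $ j)"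
  have sa: "summable (\<lambda>k. norm (a u i j k))" for u i j
    unfolding a_def real_norm_def by (rule summable_entry)
  have "(gexp M s ** gexp M t) $ i $ j = (gexp M (s + t)) $ i $ j" for i j
  proof -
    have "(gexp M s ** gexp M t) $ i $ j = (\<Sum>l\<in>UNIV. (\<Sum>k. a s i l k) * (\<Sum>k. a t l j k))"
      by (simp add: matrix_matrix_mult_def gexp_entry a_def)
    also have "\<dots> = (\<Sum>l\<in>UNIV. \<Sum>n. \<Sum>m\<le>n. a s i l m * a t l j (n - m))"
      by (intro sum.cong refl Cauchy_product sa)
    also have "\<dots> = (\<Sum>n. \<Sum>l\<in>UNIV. \<Sum>m\<le>n. a s i l m * a t l j (n - m))"
      by (rule suminf_sum[symmetric]) (intro summable_Cauchy_product sa)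
    also have "\<dots> = (\<Sum>n. (s+t)^n / fact n * matpow M n $ i $ j)"
    proof (rule suminf_cong)
      fix n
      have "(\<Sum>l\<in>UNIV. \<Sum>m\<le>n. a s i l m * a t l j (n - m))
          = (\<Sum>m\<le>n. (s^m / fact m * (t^(n-m) / fact (n-m))) * (\<Sum>l\<in>UNIV. matpow M m $ i $ l * matpow M (n-m) $ l $ j))"
        by (subst sum.swap) (simp add: a_def sum_distrib_left algebra_simps)
      also have "\<dots> = (\<Sum>m\<le>n. (s^m / fact m * (t^(n-m) / fact (n-m))) * matpow M n $ i $ j)"
      proof (rule sum.cong[OF refl])
        fix m assume "m \<in> {..n}"
        then have "matpow M n = matpow M m ** matpow M (n-m)"
          by (simp flip: matpow_add)
        then show "(s^m / fact m * (t^(n-m) / fact (n-m))) * (\<Sum>l\<in>UNIV. matpow M m $ i $ l * matpow M (n-m) $ l $ j)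
            = (s^m / fact m * (t^(n-m) / fact (n-m))) * matpow M n $ i $ j"
          by (simp add: matrix_matrix_mult_def)
      qed
      also have "\<dots> = (s+t)^n / fact n * matpow M n $ i $ j"
        by (simp add: binom_fact sum_distrib_right)
      finally show "(\<Sum>l\<in>UNIV. \<Sum>m\<le>n. a s i l m * a t l j (n - m)) = (s+t)^n / fact n * matpow M n $ i $ j" .
    qed
    also have "\<dots> = gexp M (s + t) $ i $ j" by (simp add: gexp_entry)
    finally show ?thesis .
  qed
  then show ?thesis by (simp add: vec_eq_iff)
qed

lemma gexp_zero: "gexp M 0 = mat 1"
proof -
  have "(\<lambda>k. ((0::real) ^ k / fact k) *\<^sub>R matpow M k) sums (mat 1)"
  proof -
    have "(\<lambda>k. ((0::real) ^ k / fact k) *\<^sub>R matpow M k) = (\<lambda>k. if k = 0 then mat 1 else 0)"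
      by (auto simp: power_0_left)
    then show ?thesis using sums_single[of 0 "\<lambda>_. mat 1"] by simp
  qed
  then show ?thesis unfolding gexp_def by (rule sums_unique[symmetric])
qed

lemma gexp_inv: "gexp M (-t) ** gexp M t = mat 1" "gexp M t ** gexp M (-t) = mat 1"
  using gexp_add[of M "-t" t] gexp_add[of M t "-t"] by (simp_all add: gexp_zero)

lemma gexp_comm: "gexp M s ** gexp M t = gexp M t ** gexp M s"
  by (metis gexp_add add.commute)

lemma cont_gexp_entry: "continuous_on UNIV (\<lambda>t. gexp M t $ i $ j)"
  unfolding continuous_on_def
proof (intro ballI)
  fix t :: real
  let ?c = "\<lambda>k. matpow M k $ i $ j / fact k"
  have eq: "(\<lambda>t. gexp M t $ i $ j) = (\<lambda>t. \<Sum>k. ?c k * t^k)"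
    by (simp add: gexp_entry field_simps)
  have "summable (\<lambda>k. ?c k * (\<bar>t\<bar>+1)^k)"
    using summable_entry'[of "\<bar>t\<bar>+1" M i j] by (simp add: field_simps)
  then have "isCont (\<lambda>t. \<Sum>k. ?c k * t^k) t"
    by (rule isCont_powser) simp
  then have "isCont (\<lambda>t. gexp M t $ i $ j) t" by (subst eq)
  then show "((\<lambda>t. gexp M t $ i $ j) \<longlongrightarrow> gexp M t $ i $ j) (at t within UNIV)"
    unfolding isCont_def by simp
qed

lemma cont_gexp_entry'[continuous_intros]:
  "continuous_on S f \<Longrightarrow> continuous_on S (\<lambda>x. gexp M (f x) $ i $ j)"
  using continuous_on_compose2[OF cont_gexp_entry, of S f] by auto

lemma cmat_mult: "cmat (A ** B) = cmat A ** cmat B"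
  by (simp add: vec_eq_iff cmat_def matrix_matrix_mult_def)

lemma cmat_one: "cmat (mat 1) = mat 1"
  by (simp add: vec_eq_iff cmat_def mat_def)

lemma AE_pullback:
  fixes B C :: "real^'m^'m"
  assumes "AE y in lebesgue. P y" "B ** C = mat 1"
  shows "AE x in lebesgue. P (C *v x)"
proof -
  from assms(1) obtain N where N: "N \<in> null_sets lebesgue" "{y \<in> space lebesgue. \<not> P y} \<subseteq> N"
    by (auto simp: eventually_ae_filter)
  have "negligible N" using N by (simp add: negligible_iff_null_sets)
  then have "negligible ((\<lambda>x. B *v x) ` N)"
    by (rule negligible_differentiable_image_negligible[OF order_refl])
       (intro linear_imp_differentiable_on matrix_vector_mul_linear)
  then have nn: "(\<lambda>x. B *v x) ` N \<in> null_sets lebesgue" by (simp add: negligible_iff_null_sets)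
  have "{x \<in> space lebesgue. \<not> P (C *v x)} \<subseteq> (\<lambda>x. B *v x) ` N"
  proof
    fix x assume "x \<in> {x \<in> space lebesgue. \<not> P (C *v x)}"
    then have "C *v x \<in> N" using N(2) by auto
    moreover have "x = B *v (C *v x)" by (simp add: matrix_vector_mul_assoc assms(2))
    ultimately show "x \<in> (\<lambda>x. B *v x) ` N" by blast
  qed
  then show ?thesis by (rule AE_I'[OF nn])
qed

lemma AE_lborel_ex:
  assumes "AE x in (lborel::'a::euclidean_space measure). P x" shows "\<exists>x. P x"
proof (rule ccontr)
  assume "\<not> (\<exists>x. P x)"
  with assms have "AE x in (lborel::'a measure). False" by auto
  then obtain N where N: "N \<in> null_sets (lborel::'a measure)" "UNIV \<subseteq> N"
    by (auto simp: eventually_ae_filter)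
  then have "N = UNIV" by auto
  with N show False by auto
qed

lemma AE_lborel_shift:
  assumes "AE t in lborel. P (t::real)" shows "AE t in lborel. P (s + t)"
proof -
  have "AE t in distr lborel borel ((+) s). P t" by (subst lborel_distr_plus[where c=s]) (rule assms)
  then show ?thesis by (rule AE_distrD[rotated]) simp
qed

lemma measurable_vec:
  fixes f :: "'a \<Rightarrow> 'b::euclidean_space^'n"
  assumes "\<And>i. (\<lambda>x. f x $ i) \<in> borel_measurable M"
  shows "f \<in> borel_measurable M"
proof -
  have eq: "f = (\<lambda>x. \<Sum>i\<in>UNIV. axis i (f x $ i))"
    by (auto simp: vec_eq_iff axis_def if_distrib cong: if_cong)
  have "(\<lambda>x. axis i (f x $ i)) \<in> borel_measurable M" for i
  proof (rule borel_measurable_continuous_on[OF _ assms])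
    show "continuous_on UNIV (axis i :: 'b \<Rightarrow> 'b^'n)"
      unfolding axis_def
    proof (rule continuous_on_vec_lambda)
      fix k show "continuous_on UNIV (\<lambda>x::'b. if k = i then x else 0)"
        by (cases "k = i") auto
    qed
  qed
  then have "(\<lambda>x. \<Sum>i\<in>UNIV. axis i (f x $ i)) \<in> borel_measurable M"
    by (intro borel_measurable_sum) auto
  then show ?thesis using eq by simp
qed

lemma ex_borel_version:
  fixes h :: "'a::euclidean_space \<Rightarrow> complex^'n^'k"
  assumes "h \<in> borel_measurable lebesgue"
  shows "\<exists>h'. h' \<in> borel_measurable borel \<and> (AE x in lborel. h x = h' x)"
proof -
  have m: "(\<lambda>x. F (h x $ i $ j)) \<in> borel_measurable lebesgue" if "continuous_on UNIV F" for F :: "complex \<Rightarrow> real" and i j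
    by (rule borel_measurable_continuous_on[where f="\<lambda>v. F (v $ i $ j)", OF _ assms])
       (intro continuous_on_compose2[OF that] continuous_intros, auto)
  have "\<forall>i j. \<exists>f. f \<in> borel_measurable lborel \<and> (AE x in lborel. Re (h x $ i $ j) = f x)"
    using completion_ex_borel_measurable_real[OF m[of Re, OF continuous_on_Re[OF continuous_on_id]]] by auto
  then obtain fr where fr: "\<And>i j. fr i j \<in> borel_measurable lborel" "\<And>i j. AE x in lborel. Re (h x $ i $ j) = fr i j x"
    by metis
  have "\<forall>i j. \<exists>f. f \<in> borel_measurable lborel \<and> (AE x in lborel. Im (h x $ i $ j) = f x)"
    using completion_ex_borel_measurable_real[OF m[of Im, OF continuous_on_Im[OF continuous_on_id]]] by auto
  then obtain fi where fi: "\<And>i j. fi i j \<in> borel_measurable lborel" "\<And>i j. AE x in lborel. Im (h x $ i $ j) = fi i j x"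
    by metis
  define h' where "h' x = (\<chi> i j. Complex (fr i j x) (fi i j x))" for x
  have "h' \<in> borel_measurable borel"
  proof (intro measurable_vec)
    fix i j
    have "(\<lambda>x. complex_of_real (fr i j x) + \<i> * complex_of_real (fi i j x)) \<in> borel_measurable borel"
      using fr(1)[of i j] fi(1)[of i j] by measurable
    then show "(\<lambda>x. h' x $ i $ j) \<in> borel_measurable borel"
      by (simp add: h'_def Complex_eq)
  qed
  moreover have "AE x in lborel. \<forall>i j. Re (h x $ i $ j) = fr i j x \<and> Im (h x $ i $ j) = fi i j x"
    using fr(2) fi(2) by (simp add: AE_all_countable AE_conj_iff)
  then have "AE x in lborel. h x = h' x"
    by eventually_elim (simp add: h'_def vec_eq_iff complex_eq_iff)
  ultimately show ?thesis by blast
qed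

theorem lemma2p1:
  fixes E :: "real^'m^'m" and H :: "real^'n^'n" and h :: "real^'m \<Rightarrow> complex^'n^'n"
  assumes eig: "\<And>l. is_eigenvalue E l \<Longrightarrow> Re l > 0"
    and meas: "h \<in> borel_measurable lebesgue"
    and hom: "\<And>c. c > 0 \<Longrightarrow>
      (AE x in lebesgue. h (mat_cpow c E *v x) =
         cmat (mat_cpow c ((1/2) *\<^sub>R H)) ** h x ** cmat (mat_cpow c ((1/2) *\<^sub>R transpose H)))"
  shows "\<exists>\<phi>. EH_homogeneous E H \<phi> \<and> (AE x in lebesgue. \<phi> x = h x)"
proof -
  define H2 where "H2 = (1/2) *\<^sub>R H"
  define H2T where "H2T = (1/2) *\<^sub>R transpose H"
  define G where "G = gexp E"
  define A where "A = (\<lambda>t V. cmat (gexp H2 t) ** V ** cmat (gexp H2T t))"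
  have cpow: "mat_cpow c M = gexp M (ln c)" for c and M :: "real^'k^'k"
    by (simp add: mat_cpow_def gexp_def)
  have Aadd: "A t (A s V) = A (t + s) V" for t s V
  proof -
    have "gexp H2T (t + s) = gexp H2T s ** gexp H2T t"
      by (metis gexp_add add.commute)
    then show ?thesis
      unfolding A_def by (simp add: gexp_add cmat_mult matrix_mul_assoc)
  qed
  have A0: "A 0 V = V" for V by (simp add: A_def gexp_zero cmat_one)
  have Azero: "A t 0 = 0" for t by (simp add: A_def vec_eq_iff matrix_matrix_mult_def)
  have Ainj: "v = w" if "A t v = A t w" for t v w
    using arg_cong[OF that, of "A (-t)"] by (simp add: Aadd A0)
  have Gadd: "G t *v (G s *v x) = G (t + s) *v x" for t s x
    by (simp add: G_def matrix_vector_mul_assoc gexp_add)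
  have G0: "G 0 *v x = x" for x by (simp add: G_def gexp_zero)
  obtain h' where h'meas: "h' \<in> borel_measurable borel" and hh': "AE x in lborel. h x = h' x"
    using ex_borel_version[OF meas] by blast
  have step2: "AE x in lborel. h' (G t *v x) = A t (h' x)" for t
  proof -
    have "AE x in lebesgue. h (G t *v x) = A t (h x)"
      using hom[of "exp t"] by (simp add: cpow A_def G_def H2_def H2T_def)
    moreover have "AE x in lebesgue. h x = h' x" using hh' by (rule AE_completion)
    moreover have "AE x in lebesgue. h (G t *v x) = h' (G t *v x)"
      unfolding G_def by (rule AE_pullback[OF AE_completion[OF hh'] gexp_inv(1)])
    ultimately have "AE x in lebesgue. h' (G t *v x) = A t (h' x)" by eventually_elim auto
    then show ?thesis by (simp add: AE_completion_iff)
  qed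
  define Q where "Q = (\<lambda>t x. h' (G t *v x) = A t (h' x))"
  have prodeq: "(lborel \<Otimes>\<^sub>M lborel) = (lborel :: (real \<times> (real^'m)) measure)" by (rule lborel_prod)
  have c1: "continuous_on UNIV (\<lambda>z::real \<times> (real^'m). G (fst z) *v snd z)"
    unfolding G_def matrix_vector_mult_def by (intro continuous_intros)
  have c2: "continuous_on UNIV (\<lambda>z::real \<times> (complex^'n^'n). A (fst z) (snd z))"
    unfolding A_def matrix_matrix_mult_def cmat_def by (simp; intro continuous_intros)
  have f1: "(\<lambda>z::real \<times> (real^'m). h' (G (fst z) *v snd z)) \<in> borel_measurable (lborel \<Otimes>\<^sub>M lborel)"
    unfolding prodeq measurable_lborel2
    by (rule measurable_compose[OF borel_measurable_continuous_onI[OF c1] h'meas])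
  have f2: "(\<lambda>z::real \<times> (real^'m). A (fst z) (h' (snd z))) \<in> borel_measurable (lborel \<Otimes>\<^sub>M lborel)"
  proof -
    have "(\<lambda>z::real \<times> (real^'m). (fst z, h' (snd z))) \<in> borel_measurable borel"
    proof (rule borel_measurable_Pair)
      show "(\<lambda>z::real \<times> (real^'m). fst z) \<in> borel_measurable borel"
        by (intro borel_measurable_continuous_onI continuous_intros)
      have "(\<lambda>z::real \<times> (real^'m). snd z) \<in> borel_measurable borel"
        by (intro borel_measurable_continuous_onI continuous_intros)
      from measurable_compose[OF this h'meas]
      show "(\<lambda>z::real \<times> (real^'m). h' (snd z)) \<in> borel_measurable borel" .
    qed
    from measurable_compose[OF this borel_measurable_continuous_onI[OF c2]]
    show ?thesis unfolding prodeq measurable_lborel2 by simp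
  qed
  have Qmeas: "{z \<in> space (lborel \<Otimes>\<^sub>M lborel). Q (fst z) (snd z)} \<in> sets (lborel \<Otimes>\<^sub>M lborel)"
    unfolding Q_def by (rule measurable_equality_set[OF f1 f2])
  have ps: "pair_sigma_finite (lborel :: real measure) (lborel :: (real^'m) measure)"
    by (simp add: pair_sigma_finite_def sigma_finite_lborel)
  have "AE t in lborel. AE x in lborel. Q t x" using step2 by (simp add: Q_def)
  then have fub: "AE x in lborel. AE t in lborel. Q t x"
    using pair_sigma_finite.AE_commute[OF ps Qmeas] by simp
  define S where "S x = {v. AE t in lborel. h' (G t *v x) = A t v}" for x
  have uniq: "v = w" if "v \<in> S x" "w \<in> S x" for x v w
  proof -
    have "AE t in lborel. A t v = A t w" using that unfolding S_def mem_Collect_eq by eventually_elim auto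
    then obtain t where "A t v = A t w" using AE_lborel_ex by blast
    then show ?thesis by (rule Ainj)
  qed
  have transp: "A s v \<in> S (G s *v x)" if "v \<in> S x" for s v x
  proof -
    have "AE t in lborel. h' (G (s + t) *v x) = A (s + t) v"
      using that unfolding S_def by (intro AE_lborel_shift) simp
    then show ?thesis unfolding S_def
      by (simp add: Gadd Aadd add.commute)
  qed
  define \<phi> where "\<phi> x = (if S x \<noteq> {} then THE v. v \<in> S x else 0)" for x
  have \<phi>eq: "\<phi> x = v" if "v \<in> S x" for x v
    using that uniq unfolding \<phi>_def by (auto intro!: the_equality)
  have hom\<phi>: "\<phi> (G t *v x) = A t (\<phi> x)" for t x
  proof (cases "S x = {}")
    case False
    then obtain v where v: "v \<in> S x" by auto
    show ?thesis using \<phi>eq[OF v] \<phi>eq[OF transp[OF v, of t]] by simp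
  next
    case True
    have "S (G t *v x) = {}"
    proof (rule ccontr)
      assume "S (G t *v x) \<noteq> {}"
      then obtain w where "w \<in> S (G t *v x)" by auto
      from transp[OF this, of "-t"] have "A (-t) w \<in> S x" by (simp add: Gadd G0)
      with True show False by auto
    qed
    with True show ?thesis by (simp add: \<phi>_def Azero)
  qed
  have "EH_homogeneous E H \<phi>"
    unfolding EH_homogeneous_def
  proof (intro allI impI)
    fix c :: real and x :: "real^'m" assume "c > 0" "x \<noteq> 0"
    show "\<phi> (mat_cpow c E *v x) = cmat (mat_cpow c ((1/2) *\<^sub>R H)) ** \<phi> x ** cmat (mat_cpow c ((1/2) *\<^sub>R transpose H))"
      using hom\<phi>[of "ln c" x] by (simp add: cpow A_def G_def H2_def H2T_def)
  qed
  moreover have "AE x in lebesgue. \<phi> x = h x"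
  proof -
    have "AE x in lborel. \<phi> x = h x"
      using fub hh'
    proof eventually_elim
      case (elim x)
      then have "h' x \<in> S x" by (simp add: S_def Q_def)
      then show ?case using elim(2) \<phi>eq by simp
    qed
    then show ?thesis by (rule AE_completion)
  qed
  ultimately show ?thesis by blast
qed

end
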